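(* Let $z=(z^1,\dots,z^n)$ be coordinates on an open set $Z\subset\mathbb{R}^n$, with $x^a=z^a$ ($a=1,\dots,n-1$) and $u=z^n$, and let $w=w(z)$ be a scalar unknown. The second-order equation $\tilde E(z;w_i;w_{ij})=0$ together with the condition $w=0$ is a covariant form of some second-order partial differential equation $E(x,u;u_a;u_{ab})=0$ if and only if it is invariant under the infinite-dimensional group of point transformations $(z,w)\mapsto(z,s(z)w)$, where $s$ ranges over smooth nowhere-vanishing functions of $z$.
   Context: Here $w_i=\partial w/\partial z^i$, $w_{ij}=\partial^2w/\partial z^i\partial z^j$, $u_a=\partial u/\partial x^a$, $u_{ab}=\partial^2 u/\partial x^a\partial x^b$, and one works on the region $w_n\ne0$. Invariance means invariance of the system $\{\tilde E=0,\ w=0\}$ in the second-order jet space under the second prolongation of the transformations; at points with $w=0$ the prolonged transformation acts by $w_i\mapsto s w_i$, $w_{ij}\mapsto s w_{ij}+s_i w_j+s_j w_i$ (with $s_i=\partial s/\partial z^i$). If $u=u(x)$ is defined implicitly by $w(x,u)=0$, then $u_a[w]=-w_a/w_n$ and $u_{ab}[w]=-\frac{w_{ab}}{w_n}+\frac{w_{na}w_b}{w_n^2}+\frac{w_{nb}w_a}{w_n^2}-\frac{w_aw_bw_{nn}}{w_n^3}$. The equation $\tilde E(z;w_i;w_{ij})=0$ together with $w=0$ is called a covariant form of $E(x,u;u_a;u_{ab})=0$ if, for all $z$ and all values of $(w_i,w_{ij})$ with $w_n\neq0$, $\tilde E(z;w_i;w_{ij})=0$ holds if and only if $E(z;u_a[w];u_{ab}[w])=0$.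 *)

theory Defs
  imports "HOL-Analysis.Analysis"
begin

text \<open>Coordinates z on real^'n; the distinguished index nn plays the role of z^n = u,
  the remaining indices a \<noteq> nn are the x^a.\<close>

definition pderiv_at :: "((real^'n) \<Rightarrow> real) \<Rightarrow> 'n \<Rightarrow> real^'n \<Rightarrow> real" where
  "pderiv_at f i z = frechet_derivative f (at z) (axis i 1)"

fun Ck_on :: "nat \<Rightarrow> (real^'n) set \<Rightarrow> ((real^'n) \<Rightarrow> real) \<Rightarrow> bool" where
  "Ck_on 0 S f = continuous_on S f"
| "Ck_on (Suc k) S f = ((\<forall>z\<in>S. f differentiable (at z)) \<and>
      (\<forall>i. Ck_on k S (\<lambda>z. pderiv_at f i z)))"

definition smooth_on :: "(real^'n) set \<Rightarrow> ((real^'n) \<Rightarrow> real) \<Rightarrow> bool" where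
  "smooth_on S f = (\<forall>k. Ck_on k S f)"

definition symmetric_mat :: "real^'n^'n \<Rightarrow> bool" where
  "symmetric_mat W = (\<forall>i j. W$i$j = W$j$i)"

definition u1 :: "'n \<Rightarrow> real^'n \<Rightarrow> real^'n" where
  "u1 nn p = (\<chi> a. if a = nn then 0 else - p$a / p$nn)"

definition u2 :: "'n \<Rightarrow> real^'n \<Rightarrow> real^'n^'n \<Rightarrow> real^'n^'n" where
  "u2 nn p W = (\<chi> a b. if a = nn \<or> b = nn then 0 else
      - W$a$b / p$nn + W$nn$a * p$b / (p$nn)^2 + W$nn$b * p$a / (p$nn)^2
      - p$a * p$b * W$nn$nn / (p$nn)^3)"

definition covariant_form ::
  "(real^'n) set \<Rightarrow> 'n \<Rightarrow> ((real^'n) \<Rightarrow> real^'n \<Rightarrow> real^'n^'n \<Rightarrow> real) \<Rightarrow> bool" where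
  "covariant_form Z nn Et =
     (\<exists>E :: (real^'n) \<Rightarrow> real^'n \<Rightarrow> real^'n^'n \<Rightarrow> real.
        \<forall>z\<in>Z. \<forall>p W. symmetric_mat W \<and> p$nn \<noteq> 0 \<longrightarrow>
          (Et z p W = 0 \<longleftrightarrow> E z (u1 nn p) (u2 nn p W) = 0))"

text \<open>Second prolongation of (z,w) \<mapsto> (z, s(z) w) at points with w = 0.\<close>
definition prolong_grad :: "((real^'n) \<Rightarrow> real) \<Rightarrow> real^'n \<Rightarrow> real^'n \<Rightarrow> real^'n" where
  "prolong_grad s z p = s z *\<^sub>R p"

definition prolong_hess ::
  "((real^'n) \<Rightarrow> real) \<Rightarrow> real^'n \<Rightarrow> real^'n \<Rightarrow> real^'n^'n \<Rightarrow> real^'n^'n" where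
  "prolong_hess s z p W =
     (\<chi> i j. s z * W$i$j + pderiv_at s i z * p$j + pderiv_at s j z * p$i)"

definition scaling_invariant ::
  "(real^'n) set \<Rightarrow> 'n \<Rightarrow> ((real^'n) \<Rightarrow> real^'n \<Rightarrow> real^'n^'n \<Rightarrow> real) \<Rightarrow> bool" where
  "scaling_invariant Z nn Et =
     (\<forall>s. smooth_on Z s \<and> (\<forall>z\<in>Z. s z \<noteq> 0) \<longrightarrow>
        (\<forall>z\<in>Z. \<forall>p W. symmetric_mat W \<and> p$nn \<noteq> 0 \<and> Et z p W = 0 \<longrightarrow>
            Et z (prolong_grad s z p) (prolong_hess s z p W) = 0))"

end

theory Submission
  imports Defs
begin

lemma exp_hd:
  "((\<lambda>y::real^'n. a * exp (\<tau> \<bullet> y + b)) has_derivative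
     (\<lambda>h. a * (exp (\<tau> \<bullet> y + b) * (\<tau> \<bullet> h)))) (at y)"
  by (auto intro!: derivative_eq_intros)

lemma exp_pd:
  "pderiv_at (\<lambda>y::real^'n. a * exp (\<tau> \<bullet> y + b)) i y = (a * \<tau>$i) * exp (\<tau> \<bullet> y + b)"
proof -
  have "frechet_derivative (\<lambda>y::real^'n. a * exp (\<tau> \<bullet> y + b)) (at y) =
     (\<lambda>h. a * (exp (\<tau> \<bullet> y + b) * (\<tau> \<bullet> h)))"
    using frechet_derivative_at[OF exp_hd[of a \<tau> b y]] by (rule sym)
  then show ?thesis unfolding pderiv_at_def by (simp add: inner_axis)
qed

lemma exp_pd':
  "pderiv_at (\<lambda>y::real^'n. a * exp (\<tau> \<bullet> y + b)) i = (\<lambda>y. (a * \<tau>$i) * exp (\<tau> \<bullet> y + b))"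
  by (rule ext) (rule exp_pd)

lemma exp_ck: "Ck_on k S (\<lambda>y::real^'n. a * exp (\<tau> \<bullet> y + b))"
proof (induction k arbitrary: a)
  case 0
  have "continuous_on S (\<lambda>y::real^'n. a * exp (\<tau> \<bullet> y + b))"
    by (intro continuous_intros)
  then show ?case by simp
next
  case (Suc k)
  have d: "\<forall>z\<in>S. (\<lambda>y::real^'n. a * exp (\<tau> \<bullet> y + b)) differentiable (at z)"
    unfolding differentiable_def using exp_hd by blast
  have "\<forall>i. Ck_on k S (pderiv_at (\<lambda>y::real^'n. a * exp (\<tau> \<bullet> y + b)) i)"
    unfolding exp_pd' using Suc.IH by blast
  then show ?case using d by simp
qed

lemma exp_smooth: "smooth_on S (\<lambda>y::real^'n. a * exp (\<tau> \<bullet> y + b))"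
  unfolding smooth_on_def using exp_ck by blast

lemma key:
  fixes p p' :: "real^'n" and W W' :: "real^'n^'n"
  assumes sW: "symmetric_mat W" and sW': "symmetric_mat W'"
    and pn: "p$nn \<noteq> 0" and pn': "p'$nn \<noteq> 0"
    and e1: "u1 nn p = u1 nn p'" and e2: "u2 nn p W = u2 nn p' W'"
  shows "\<exists>s. smooth_on Z s \<and> (\<forall>z\<in>Z. s z \<noteq> 0) \<and>
     prolong_grad s z p = p' \<and> prolong_hess s z p W = W'"
proof -
  define c where "c = p'$nn / p$nn"
  have c0: "c \<noteq> 0" using pn pn' by (simp add: c_def)
  have pp: "p' = c *\<^sub>R p"
  proof (rule vec_eq_iff[THEN iffD2], rule allI)
    fix a
    show "p'$a = (c *\<^sub>R p)$a"
    proof (cases "a = nn")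
      case True then show ?thesis using pn by (simp add: c_def)
    next
      case False
      have "p$a / p$nn = p'$a / p'$nn"
        using arg_cong[OF e1, of "\<lambda>q. q$a"] False by (simp add: u1_def)
      then show ?thesis using pn pn' by (simp add: c_def field_simps)
    qed
  qed
  define D where "D = W' - c *\<^sub>R W"
  define r where "r = (\<lambda>i. p$i / p$nn)"
  have Dsym: "D$i$j = D$j$i" for i j using sW sW' by (simp add: D_def symmetric_mat_def)
  have Dab: "D$a$b = D$nn$a * r b + D$nn$b * r a - r a * r b * D$nn$nn"
    if "a \<noteq> nn" "b \<noteq> nn" for a b
  proof -
    have h: "u2 nn p W $a$b = u2 nn p' W' $a$b" using e2 by simp
    have p'i: "p'$i = c * p$i" for i using pp by simp
    have gen: "- V$a$b / q + V$nn$a * (k*p$b) / q^2 + V$nn$b * (k*p$a) / q^2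
      - (k*p$a) * (k*p$b) * V$nn$nn / q^3 =
      - (V$a$b - V$nn$a * r b - V$nn$b * r a + r a * r b * V$nn$nn) / q"
      if "q = k * p$nn" "k \<noteq> 0" for V :: "real^'n^'n" and q k
      using that pn unfolding r_def by (simp add: field_simps power2_eq_square power3_eq_cube)
    have "- W$a$b / p$nn + W$nn$a * p$b / (p$nn)^2 + W$nn$b * p$a / (p$nn)^2
      - p$a * p$b * W$nn$nn / (p$nn)^3 =
      - W'$a$b / (c*p$nn) + W'$nn$a * (c*p$b) / (c*p$nn)^2 + W'$nn$b * (c*p$a) / (c*p$nn)^2
      - (c*p$a) * (c*p$b) * W'$nn$nn / (c*p$nn)^3"
      using h that by (simp add: u2_def p'i)
    then have eqq: "- (W$a$b - W$nn$a * r b - W$nn$b * r a + r a * r b * W$nn$nn) / p$nn =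
       - (W'$a$b - W'$nn$a * r b - W'$nn$b * r a + r a * r b * W'$nn$nn) / (c*p$nn)"
      using gen[of "p$nn" 1 W] gen[of "c*p$nn" c W'] c0 by simp
    have canc: "\<And>X Y q k. - X / q = - Y / (k * q) \<Longrightarrow> q \<noteq> 0 \<Longrightarrow> k \<noteq> 0 \<Longrightarrow> k * X = (Y::real)"
      by (simp add: field_simps)
    have "c * (W$a$b - W$nn$a * r b - W$nn$b * r a + r a * r b * W$nn$nn) =
       W'$a$b - W'$nn$a * r b - W'$nn$b * r a + r a * r b * W'$nn$nn"
      by (rule canc[OF eqq pn c0])
    then show ?thesis by (simp add: D_def algebra_simps)
  qed
  define \<sigma> :: "real^'n" where "\<sigma> = (\<chi> i. (D$i$nn - D$nn$nn * r i / 2) / p$nn)"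
  have rn: "r nn = 1" using pn by (simp add: r_def)
  have pr: "p$i = r i * p$nn" for i using pn by (simp add: r_def)
  have Dij: "D$i$j = \<sigma>$i * p$j + \<sigma>$j * p$i" for i j
  proof -
    have A: "\<sigma>$i * p$j + \<sigma>$j * p$i =
      (D$i$nn - D$nn$nn * r i / 2) * r j + (D$j$nn - D$nn$nn * r j / 2) * r i"
      unfolding \<sigma>_def using pn by (simp add: pr[of i] pr[of j] field_simps)
    show ?thesis
    proof (cases "i = nn")
      case True then show ?thesis using A rn Dsym[of nn j] by (simp add: algebra_simps)
    next
      case F: False
      show ?thesis
      proof (cases "j = nn")
        case True then show ?thesis using A rn Dsym[of i nn] by (simp add: algebra_simps)
      next
        case False then show ?thesis using A F Dab[OF F False] Dsym[of i nn] Dsym[of j nn]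
          by (simp add: algebra_simps)
      qed
    qed
  qed
  define \<tau> where "\<tau> = (1/c) *\<^sub>R \<sigma>"
  define b where "b = - (\<tau> \<bullet> z)"
  define s where "s = (\<lambda>y::real^'n. c * exp (\<tau> \<bullet> y + b))"
  have sz: "s z = c" by (simp add: s_def b_def)
  have ds: "pderiv_at s i z = \<sigma>$i" for i
    unfolding s_def exp_pd using c0 by (simp add: b_def \<tau>_def)
  have "smooth_on Z s" unfolding s_def by (rule exp_smooth)
  moreover have "\<forall>z\<in>Z. s z \<noteq> 0" using c0 by (simp add: s_def)
  moreover have "prolong_grad s z p = p'" by (simp add: prolong_grad_def sz pp)
  moreover have "prolong_hess s z p W = W'"
  proof -
    have "W'$i$j = c * W$i$j + \<sigma>$i * p$j + \<sigma>$j * p$i" for i j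
      using Dij[of i j] by (simp add: D_def algebra_simps)
    then show ?thesis by (simp add: prolong_hess_def sz ds vec_eq_iff)
  qed
  ultimately show ?thesis by blast
qed

lemma fwd:
  fixes p :: "real^'n" and W :: "real^'n^'n"
  assumes sW: "symmetric_mat W" and pn: "p$nn \<noteq> 0" and s0: "s z \<noteq> 0"
  shows "symmetric_mat (prolong_hess s z p W)" "(prolong_grad s z p)$nn \<noteq> 0"
    "u1 nn (prolong_grad s z p) = u1 nn p"
    "u2 nn (prolong_grad s z p) (prolong_hess s z p W) = u2 nn p W"
proof -
  show "symmetric_mat (prolong_hess s z p W)"
    using sW by (simp add: symmetric_mat_def prolong_hess_def algebra_simps)
  show "(prolong_grad s z p)$nn \<noteq> 0" using pn s0 by (simp add: prolong_grad_def)
  show "u1 nn (prolong_grad s z p) = u1 nn p"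
    using s0 by (simp add: u1_def prolong_grad_def vec_eq_iff)
  show "u2 nn (prolong_grad s z p) (prolong_hess s z p W) = u2 nn p W"
  proof (simp add: vec_eq_iff, intro allI)
    fix a b
    have [simp]: "W$nn$a = W$a$nn" "W$nn$b = W$b$nn" using sW by (auto simp: symmetric_mat_def)
    show "u2 nn (prolong_grad s z p) (prolong_hess s z p W) $ a $ b = u2 nn p W $ a $ b"
      using s0 pn by (simp add: u2_def prolong_grad_def prolong_hess_def field_simps
          power2_eq_square power3_eq_cube)
  qed
qed

theorem theorem3:
  fixes Z :: "(real^'n) set" and nn :: 'n
    and Et :: "(real^'n) \<Rightarrow> real^'n \<Rightarrow> real^'n^'n \<Rightarrow> real"
  assumes "open Z" and "CARD('n) \<ge> 2"
  shows "covariant_form Z nn Et \<longleftrightarrow> scaling_invariant Z nn Et"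
proof
  assume "covariant_form Z nn Et"
  then obtain E :: "(real^'n) \<Rightarrow> real^'n \<Rightarrow> real^'n^'n \<Rightarrow> real" where E: "\<forall>z\<in>Z. \<forall>p W. symmetric_mat W \<and> p$nn \<noteq> 0 \<longrightarrow>
          (Et z p W = 0 \<longleftrightarrow> E z (u1 nn p) (u2 nn p W) = 0)"
    unfolding covariant_form_def by blast
  show "scaling_invariant Z nn Et"
    unfolding scaling_invariant_def
  proof (intro allI impI ballI, elim conjE)
    fix s :: "real^'n \<Rightarrow> real" and z p :: "real^'n" and W :: "real^'n^'n"
    assume s0: "\<forall>z\<in>Z. s z \<noteq> 0" and z: "z \<in> Z" and sW: "symmetric_mat W"
      and pn: "p$nn \<noteq> 0" and e: "Et z p W = 0"
    have sz: "s z \<noteq> 0" using s0 z by blast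
    have f: "symmetric_mat (prolong_hess s z p W)" "(prolong_grad s z p)$nn \<noteq> 0"
      "u1 nn (prolong_grad s z p) = u1 nn p"
      "u2 nn (prolong_grad s z p) (prolong_hess s z p W) = u2 nn p W"
      using fwd[of W p nn s z] sW pn sz by blast+
    have "E z (u1 nn p) (u2 nn p W) = 0" using E z sW pn e by blast
    then show "Et z (prolong_grad s z p) (prolong_hess s z p W) = 0"
      using E z f by metis
  qed
next
  assume inv: "scaling_invariant Z nn Et"
  define E where "E = (\<lambda>z q U. if (\<exists>p W. symmetric_mat W \<and> p$nn \<noteq> 0 \<and> u1 nn p = q
      \<and> u2 nn p W = U \<and> Et z p W = 0) then (0::real) else 1)"
  show "covariant_form Z nn Et"
    unfolding covariant_form_def
  proof (rule exI[of _ E], intro ballI allI impI, elim conjE)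
    fix z p :: "real^'n" and W :: "real^'n^'n"
    assume z: "z \<in> Z" and sW: "symmetric_mat W" and pn: "p$nn \<noteq> 0"
    show "Et z p W = 0 \<longleftrightarrow> E z (u1 nn p) (u2 nn p W) = 0"
    proof
      assume "Et z p W = 0"
      then show "E z (u1 nn p) (u2 nn p W) = 0" using sW pn unfolding E_def by auto
    next
      assume "E z (u1 nn p) (u2 nn p W) = 0"
      then obtain p' W' where h: "symmetric_mat W'" "p'$nn \<noteq> 0" "u1 nn p' = u1 nn p"
        "u2 nn p' W' = u2 nn p W" "Et z p' W' = 0"
        unfolding E_def by (auto split: if_splits)
      obtain s where s: "smooth_on Z s" "\<forall>z\<in>Z. s z \<noteq> 0"
        "prolong_grad s z p' = p" "prolong_hess s z p' W' = W"
        using key[OF h(1) sW h(2) pn h(3) h(4), of Z z] by blast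
      show "Et z p W = 0"
        using inv s h z unfolding scaling_invariant_def by metis
    qed
  qed
qed

end
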